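(* Let $(E,\mathsf{E},\mu)$ and $(\Omega,\mathsf{F},\mathbb{P})$ be probability spaces, with $(E,\mathsf{E},\mu)$ complete, and let $X$ be a separable Hadamard space. Let $f:E\times X\to(-\infty,+\infty]$ be a normal convex integrand such that $\underline{f}(x):=\int f(e,x)\,d\mu(e)$ is proper and $\mathrm{argmin}\,\underline{f}\neq\emptyset$; write $F(x):=\underline{f}(x)-\min\underline{f}$. Let $x_0\in X$, let $(\lambda_n)$ be positive reals with $\sum_n\lambda_n=\infty$, $\sum_n\lambda_n^2<\infty$, let $(\xi_{n+1})_{n\in\mathbb{N}}$ be i.i.d.\ random variables $\Omega\to E$ with distribution $\mu$, and let $x_{n+1}:=\mathrm{prox}^f_{\lambda_n}(\xi_{n+1},x_n)$. Assume there is a positive $L\in L^2(E,\mu)$ with $f(e,x)-f(e,y)\le L(e)d(x,y)$ for all $x,y\in X$ and $\mu$-almost all $e$, and set $\underline{L}:=\int L^2\,d\mu$. Let $z\in\mathrm{argmin}\,\underline{f}$ and $b>d^2(x_0,z)$, let $\theta:\mathbb{N}\times(0,\infty)\to\mathbb{N}$ satisfy $\sum_{n=k}^{\theta(k,b')}\lambda_n\ge b'$ for all $b'>0$, $k\in\mathbb{N}$, and let $T>\sum_{n=0}^\infty\lambda_n^2$. Then for all $\varepsilon>0$ and $N\in\mathbb{N}$ there exists $n\in\mathbb{N}$ with $N\le n\le\theta(N,(b+4\underline{L}T)/\varepsilon)$ and $\mathbb{E}[F(x_n)]<\varepsilon$.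
   Context: A Hadamard space is a complete geodesic metric space $(X,d)$ satisfying, for all $x\in X$, $t\in[0,1]$ and geodesics $\gamma:[0,l]\to X$, $d^2(\gamma(tl),x)\le(1-t)d^2(\gamma(0),x)+td^2(\gamma(l),x)-t(1-t)d^2(\gamma(0),\gamma(l))$. A normal convex integrand is a $\mathsf{E}\otimes\mathsf{B}(X)$-measurable $f:E\times X\to(-\infty,+\infty]$ with each $f(e,\cdot)$ proper, lower semicontinuous and convex (along geodesics). $\mathrm{prox}^f_\lambda(e,x):=\mathrm{argmin}_{y\in X}\{f(e,y)+\frac1{2\lambda}d^2(x,y)\}$. *)

theory Defs
  imports "HOL-Probability.Probability"
begin

definition geodesic :: "(real \<Rightarrow> 'a::metric_space) \<Rightarrow> real \<Rightarrow> bool" where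
  "geodesic \<gamma> l \<longleftrightarrow> 0 \<le> l \<and>
     (\<forall>s\<in>{0..l}. \<forall>t\<in>{0..l}. dist (\<gamma> s) (\<gamma> t) = \<bar>s - t\<bar>)"

definition geodesic_space :: "'a::metric_space itself \<Rightarrow> bool" where
  "geodesic_space _ \<longleftrightarrow>
     (\<forall>x y::'a. \<exists>\<gamma>. geodesic \<gamma> (dist x y) \<and> \<gamma> 0 = x \<and> \<gamma> (dist x y) = y)"

definition hadamard_space :: "'a::metric_space itself \<Rightarrow> bool" where
  "hadamard_space T \<longleftrightarrow> Topological_Spaces.complete (UNIV :: 'a set) \<and> geodesic_space T \<and>
     (\<forall>(\<gamma>::real \<Rightarrow> 'a) l x t. geodesic \<gamma> l \<longrightarrow> t \<in> {0..1} \<longrightarrow>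
        (dist (\<gamma> (t * l)) x)\<^sup>2 \<le> (1 - t) * (dist (\<gamma> 0) x)\<^sup>2 + t * (dist (\<gamma> l) x)\<^sup>2
          - t * (1 - t) * (dist (\<gamma> 0) (\<gamma> l))\<^sup>2)"

definition separable_space :: "'a::metric_space itself \<Rightarrow> bool" where
  "separable_space _ \<longleftrightarrow> (\<exists>D::'a set. countable D \<and> closure D = UNIV)"

text \<open>Functions with values in (-\<infinity>,+\<infinity>] are modelled as ereal-valued functions never equal to -\<infinity>.\<close>
definition proper_fun :: "('a \<Rightarrow> ereal) \<Rightarrow> bool" where
  "proper_fun g \<longleftrightarrow> (\<forall>x. g x \<noteq> -\<infinity>) \<and> (\<exists>x. g x \<noteq> \<infinity>)"

definition lsc_fun :: "('a::topological_space \<Rightarrow> ereal) \<Rightarrow> bool" where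
  "lsc_fun g \<longleftrightarrow> (\<forall>c. closed {x. g x \<le> c})"

definition geod_convex :: "('a::metric_space \<Rightarrow> ereal) \<Rightarrow> bool" where
  "geod_convex g \<longleftrightarrow> (\<forall>\<gamma> l t. geodesic \<gamma> l \<longrightarrow> t \<in> {0..1} \<longrightarrow>
      g (\<gamma> (t * l)) \<le> ereal (1 - t) * g (\<gamma> 0) + ereal t * g (\<gamma> l))"

definition normal_convex_integrand ::
    "'e measure \<Rightarrow> ('e \<Rightarrow> 'a::metric_space \<Rightarrow> ereal) \<Rightarrow> bool" where
  "normal_convex_integrand M f \<longleftrightarrow>
     (\<lambda>(e, x). f e x) \<in> borel_measurable (M \<Otimes>\<^sub>M borel) \<and>
     (\<forall>e\<in>space M. proper_fun (f e) \<and> lsc_fun (f e) \<and> geod_convex (f e))"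

definition ereal_integral :: "'e measure \<Rightarrow> ('e \<Rightarrow> ereal) \<Rightarrow> ereal" where
  "ereal_integral M g =
     (let p = enn2ereal (\<integral>\<^sup>+ e. e2ennreal (g e) \<partial>M);
          n = enn2ereal (\<integral>\<^sup>+ e. e2ennreal (- g e) \<partial>M)
      in if p = \<infinity> then \<infinity> else p - n)"

definition integral_fun :: "'e measure \<Rightarrow> ('e \<Rightarrow> 'a \<Rightarrow> ereal) \<Rightarrow> 'a \<Rightarrow> ereal" where
  "integral_fun M f x = ereal_integral M (\<lambda>e. f e x)"

definition argmin_set :: "('a \<Rightarrow> ereal) \<Rightarrow> 'a set" where
  "argmin_set g = {y. \<forall>w. g y \<le> g w}"

definition prox :: "('e \<Rightarrow> 'a::metric_space \<Rightarrow> ereal) \<Rightarrow> real \<Rightarrow> 'e \<Rightarrow> 'a \<Rightarrow> 'a set" where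
  "prox f lam e x = argmin_set (\<lambda>y. f e y + ereal ((dist x y)\<^sup>2 / (2 * lam)))"

end

theory Submission
  imports Defs
begin

definition gconv :: "('a::metric_space \<Rightarrow> real) \<Rightarrow> bool" where
  "gconv h \<longleftrightarrow> (\<forall>\<gamma> l t. geodesic \<gamma> l \<longrightarrow> t \<in> {0..1} \<longrightarrow>
      h (\<gamma> (t * l)) \<le> (1 - t) * h (\<gamma> 0) + t * h (\<gamma> l))"

lemma had_geo:
  fixes a b :: "'a::metric_space"
  assumes "hadamard_space TYPE('a::metric_space)"
  obtains \<gamma> :: "real \<Rightarrow> 'a" where "geodesic \<gamma> (dist a b)" "\<gamma> 0 = a" "\<gamma> (dist a b) = b"
  using assms unfolding hadamard_space_def geodesic_space_def by blast

lemma had_cat0: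
  assumes "hadamard_space TYPE('a::metric_space)" "geodesic (\<gamma>::real \<Rightarrow> 'a) l" "t \<in> {0..1}"
  shows "(dist (\<gamma> (t * l)) x)\<^sup>2 \<le> (1 - t) * (dist (\<gamma> 0) x)\<^sup>2 + t * (dist (\<gamma> l) x)\<^sup>2
          - t * (1 - t) * (dist (\<gamma> 0) (\<gamma> l))\<^sup>2"
  using assms unfolding hadamard_space_def by blast

lemma small_le0:
  fixes A B :: real
  assumes "B \<ge> 0" "\<And>t. 0 < t \<Longrightarrow> t \<le> 1 \<Longrightarrow> A \<le> t * B"
  shows "A \<le> 0"
proof (rule ccontr)
  assume "\<not> A \<le> 0"
  then have A: "A > 0" by simp
  define t where "t = min 1 (A / (2 * B + 1))"
  have t0: "0 < t" "t \<le> 1" using A assms(1) by (auto simp: t_def)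
  have "t * B \<le> (A / (2 * B + 1)) * B" using assms(1) by (intro mult_right_mono) (auto simp: t_def)
  also have "\<dots> < A" using A assms(1) by (simp add: field_simps add_pos_nonneg)
  finally show False using assms(2)[OF t0] by simp
qed

lemma prox_ineq:
  fixes h :: "'a::metric_space \<Rightarrow> real"
  assumes had: "hadamard_space TYPE('a)" and hc: "gconv h" and lam: "lam > 0"
    and pmin: "\<And>w. h p + (dist x p)\<^sup>2 / (2 * lam) \<le> h w + (dist x w)\<^sup>2 / (2 * lam)"
  shows "(dist p y)\<^sup>2 \<le> (dist x y)\<^sup>2 - (dist x p)\<^sup>2 + 2 * lam * (h y - h p)"
proof -
  obtain \<gamma> :: "real \<Rightarrow> 'a" where g: "geodesic \<gamma> (dist p y)" "\<gamma> 0 = p" "\<gamma> (dist p y) = y"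
    using had_geo[OF had] by blast
  let ?R = "(dist x y)\<^sup>2 - (dist x p)\<^sup>2 + 2 * lam * (h y - h p)"
  have "(dist p y)\<^sup>2 - ?R \<le> t * (dist p y)\<^sup>2" if t: "0 < t" "t \<le> 1" for t
  proof -
    let ?q = "\<gamma> (t * dist p y)"
    have c1: "(dist ?q x)\<^sup>2 \<le> (1 - t) * (dist p x)\<^sup>2 + t * (dist y x)\<^sup>2 - t * (1 - t) * (dist p y)\<^sup>2"
      using had_cat0[OF had g(1), of t x] t g by simp
    have c2: "h ?q \<le> (1 - t) * h p + t * h y"
      using hc g t unfolding gconv_def by force
    have m: "h p + (dist x p)\<^sup>2 / (2 * lam) \<le> h ?q + (dist x ?q)\<^sup>2 / (2 * lam)" by (rule pmin)
    have "2 * lam * (h p + (dist x p)\<^sup>2 / (2 * lam)) \<le> 2 * lam * (h ?q + (dist x ?q)\<^sup>2 / (2 * lam))"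
      using m lam by (intro mult_left_mono) auto
    then have "2 * lam * h p + (dist x p)\<^sup>2 \<le> 2 * lam * h ?q + (dist x ?q)\<^sup>2"
      using lam by (simp add: distrib_left)
    also have "\<dots> \<le> 2 * lam * ((1 - t) * h p + t * h y) + ((1 - t) * (dist p x)\<^sup>2 + t * (dist y x)\<^sup>2 - t * (1 - t) * (dist p y)\<^sup>2)"
      using c1 c2 lam by (simp add: dist_commute add_mono)
    finally have "t * (2 * lam * h p + (dist x p)\<^sup>2) \<le> t * (2 * lam * h y + (dist x y)\<^sup>2 - (1 - t) * (dist p y)\<^sup>2)"
      by (simp add: algebra_simps dist_commute)
    then have "2 * lam * h p + (dist x p)\<^sup>2 \<le> 2 * lam * h y + (dist x y)\<^sup>2 - (1 - t) * (dist p y)\<^sup>2"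
      using t by simp
    then show ?thesis by (simp add: algebra_simps)
  qed
  then have "(dist p y)\<^sup>2 - ?R \<le> 0" by (intro small_le0[of "(dist p y)\<^sup>2"]) auto
  then show ?thesis by simp
qed

lemma prox_unique:
  fixes h :: "'a::metric_space \<Rightarrow> real"
  assumes had: "hadamard_space TYPE('a)" and hc: "gconv h" and lam: "lam > 0"
    and p: "\<And>w. h p + (dist x p)\<^sup>2 / (2 * lam) \<le> h w + (dist x w)\<^sup>2 / (2 * lam)"
    and q: "\<And>w. h q + (dist x q)\<^sup>2 / (2 * lam) \<le> h w + (dist x w)\<^sup>2 / (2 * lam)"
  shows "p = q"
proof -
  have a: "(dist p q)\<^sup>2 \<le> (dist x q)\<^sup>2 - (dist x p)\<^sup>2 + 2 * lam * (h q - h p)"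
    by (rule prox_ineq[OF had hc lam p])
  have b: "h p + (dist x p)\<^sup>2 / (2 * lam) = h q + (dist x q)\<^sup>2 / (2 * lam)"
    using p[of q] q[of p] by simp
  then have "2 * lam * h p + (dist x p)\<^sup>2 = 2 * lam * h q + (dist x q)\<^sup>2"
    using lam by (simp add: field_simps)
  with a have "(dist p q)\<^sup>2 \<le> 0" by (simp add: algebra_simps)
  then show ?thesis by simp
qed

lemma midpoint_ineq:
  fixes h :: "'a::metric_space \<Rightarrow> real"
  assumes had: "hadamard_space TYPE('a)" and hc: "gconv h" and lam: "lam > 0"
  shows "\<exists>m. h m + (dist x m)\<^sup>2 / (2 * lam) \<le>
     ((h a + (dist x a)\<^sup>2 / (2 * lam)) + (h b + (dist x b)\<^sup>2 / (2 * lam))) / 2 - (dist a b)\<^sup>2 / (8 * lam)"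
proof -
  obtain \<gamma> :: "real \<Rightarrow> 'a" where g: "geodesic \<gamma> (dist a b)" "\<gamma> 0 = a" "\<gamma> (dist a b) = b"
    using had_geo[OF had] by blast
  let ?m = "\<gamma> ((1/2) * dist a b)"
  have c1: "(dist ?m x)\<^sup>2 \<le> (1 - 1/2) * (dist a x)\<^sup>2 + (1/2) * (dist b x)\<^sup>2 - (1/2) * (1 - 1/2) * (dist a b)\<^sup>2"
    using had_cat0[OF had g(1), of "1/2" x] g by simp
  have "h ?m \<le> (1 - 1/2) * h (\<gamma> 0) + (1/2) * h (\<gamma> (dist a b))"
    using hc[unfolded gconv_def, rule_format, OF g(1), of "1/2"] by simp
  then have c2: "h ?m \<le> (1 - 1/2) * h a + (1/2) * h b" using g by simp
  have "h ?m + (dist x ?m)\<^sup>2 / (2 * lam) \<le> (1 - 1/2) * h a + (1/2) * h b +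
     ((1 - 1/2) * (dist a x)\<^sup>2 + (1/2) * (dist b x)\<^sup>2 - (1/2) * (1 - 1/2) * (dist a b)\<^sup>2) / (2 * lam)"
    using c1 c2 lam by (intro add_mono divide_right_mono) (auto simp: dist_commute)
  also have "\<dots> = ((h a + (dist x a)\<^sup>2 / (2 * lam)) + (h b + (dist x b)\<^sup>2 / (2 * lam))) / 2 - (dist a b)\<^sup>2 / (8 * lam)"
    using lam by (simp add: field_simps dist_commute)
  finally show ?thesis by blast
qed

lemma lip_isCont:
  fixes h :: "'a::metric_space \<Rightarrow> real"
  assumes K: "K \<ge> 0" and "\<And>u v. \<bar>h u - h v\<bar> \<le> K * dist u v"
  shows "isCont h p"
proof -
  have "K-lipschitz_on UNIV h"
    using assms by (intro lipschitz_onI) (auto simp: dist_real_def)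
  then have "continuous_on UNIV h" by (rule lipschitz_on_continuous_on)
  then show ?thesis by (simp add: continuous_on_eq_continuous_at)
qed

lemma half_le: "(x::real) - 2 * m \<le> y \<Longrightarrow> x / 2 - m \<le> y / 2"
  by simp

lemma aux8: "(d::real) / (8 * lam) \<le> s / 2 \<Longrightarrow> lam > 0 \<Longrightarrow> d \<le> 4 * lam * s"
  by (simp add: field_simps)

lemma prox_exists:
  fixes h :: "'a::metric_space \<Rightarrow> real"
  assumes had: "hadamard_space TYPE('a)" and hc: "gconv h" and lam: "lam > 0"
    and K: "K \<ge> 0" and lip: "\<And>u v. \<bar>h u - h v\<bar> \<le> K * dist u v"
  shows "\<exists>p. \<forall>w. h p + (dist x p)\<^sup>2 / (2 * lam) \<le> h w + (dist x w)\<^sup>2 / (2 * lam)"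
proof -
  define \<phi> where "\<phi> w = h w + (dist x w)\<^sup>2 / (2 * lam)" for w
  have lb: "h x - K\<^sup>2 * lam / 2 \<le> \<phi> w" for w
  proof -
    have "h x - h w \<le> K * dist x w" using lip[of x w] by simp
    moreover have "0 \<le> (dist x w - K * lam)\<^sup>2 / (2 * lam)" using lam by simp
    moreover have "(dist x w - K * lam)\<^sup>2 / (2 * lam) = (dist x w)\<^sup>2 / (2 * lam) - K * dist x w + K\<^sup>2 * lam / 2"
      using lam by (simp add: field_simps power2_eq_square)
    ultimately show ?thesis unfolding \<phi>_def by linarith
  qed
  define m where "m = Inf (range \<phi>)"
  have bdd: "bdd_below (range \<phi>)" using lb by (intro bdd_belowI2) blast
  have mle: "m \<le> \<phi> w" for w unfolding m_def using bdd by (intro cInf_lower) auto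
  have "\<exists>y. \<phi> y < m + 1 / Suc k" for k
  proof -
    have "Inf (range \<phi>) < m + 1 / Suc k" unfolding m_def by simp
    from cInf_lessD[OF _ this] show ?thesis by auto
  qed
  then obtain ys where ys: "\<And>k. \<phi> (ys k) < m + 1 / Suc k" by metis
  have dbound: "(dist (ys j) (ys k))\<^sup>2 \<le> 4 * lam * (1 / Suc j + 1 / Suc k)" for j k
  proof -
    obtain c where c: "\<phi> c \<le> (\<phi> (ys j) + \<phi> (ys k)) / 2 - (dist (ys j) (ys k))\<^sup>2 / (8 * lam)"
      using midpoint_ineq[OF had hc lam, of x "ys j" "ys k"] unfolding \<phi>_def by blast
    have "(dist (ys j) (ys k))\<^sup>2 / (8 * lam) \<le> (\<phi> (ys j) + \<phi> (ys k)) / 2 - m"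
      using c mle[of c] by linarith
    also have "\<dots> \<le> (1 / Suc j + 1 / Suc k) / 2"
    proof -
      have "\<phi> (ys j) + \<phi> (ys k) - 2 * m \<le> 1 / Suc j + 1 / Suc k" using ys[of j] ys[of k] by linarith
      then show ?thesis by (rule half_le)
    qed
    finally show ?thesis using lam by (rule aux8)
  qed
  have "Cauchy ys"
  proof (rule metric_CauchyI)
    fix e :: real assume e: "0 < e"
    obtain N :: nat where N: "8 * lam / e\<^sup>2 < N" using reals_Archimedean2 by blast
    have "dist (ys j) (ys k) < e" if "j \<ge> N" "k \<ge> N" for j k
    proof -
      have "1 / real (Suc j) \<le> 1 / Suc N" "1 / real (Suc k) \<le> 1 / Suc N"
        using that by (simp_all add: frac_le)
      then have s: "1 / real (Suc j) + 1 / real (Suc k) \<le> 2 * (1 / real (Suc N))" by linarith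
      have "4 * lam * (1 / real (Suc j) + 1 / real (Suc k)) \<le> 4 * lam * (2 * (1 / real (Suc N)))"
        using lam s by (intro mult_left_mono) auto
      then have "(dist (ys j) (ys k))\<^sup>2 \<le> 4 * lam * (2 * (1 / real (Suc N)))"
        using dbound[of j k] by linarith
      also have "\<dots> = 8 * lam / real (Suc N)" by simp
      also have "\<dots> < e\<^sup>2"
      proof -
        have "8 * lam < e\<^sup>2 * N" using N e by (simp add: field_simps)
        also have "\<dots> < e\<^sup>2 * Suc N" using e by simp
        finally show ?thesis by (simp add: pos_divide_less_eq)
      qed
      finally show ?thesis using e by (simp add: power_less_imp_less_base)
    qed
    then show "\<exists>M. \<forall>m\<ge>M. \<forall>n\<ge>M. dist (ys m) (ys n) < e" by blast
  qed
  moreover have "Topological_Spaces.complete (UNIV :: 'a set)" using had unfolding hadamard_space_def by simp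
  ultimately obtain p where p: "ys \<longlonglongrightarrow> p" by (metis UNIV_I completeE)
  have cont: "isCont \<phi> p" unfolding \<phi>_def
    using lam by (intro continuous_intros lip_isCont[OF K lip]) auto
  have t1: "(\<lambda>k. \<phi> (ys k)) \<longlonglongrightarrow> \<phi> p" using isCont_tendsto_compose[OF cont p] .
  have t2: "(\<lambda>k. \<phi> (ys k)) \<longlonglongrightarrow> m"
  proof (rule real_tendsto_sandwich[of "\<lambda>k. m" _ _ "\<lambda>k. m + 1 / Suc k"])
    show "\<forall>\<^sub>F k in sequentially. m \<le> \<phi> (ys k)" using mle by simp
    show "\<forall>\<^sub>F k in sequentially. \<phi> (ys k) \<le> m + 1 / Suc k" using ys by (simp add: less_imp_le)
    show "(\<lambda>k. m) \<longlonglongrightarrow> m" by simp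
    show "(\<lambda>k. m + 1 / real (Suc k)) \<longlonglongrightarrow> m"
      using tendsto_add[OF tendsto_const[of m] LIMSEQ_Suc[OF lim_inverse_n']] by (simp add: divide_inverse)
  qed
  have "\<phi> p = m" using LIMSEQ_unique[OF t1 t2] .
  then show ?thesis using mle unfolding \<phi>_def by metis
qed


lemma prox_meas:
  fixes fr :: "'e \<Rightarrow> 'a::metric_space \<Rightarrow> real" and M :: "'e measure"
  assumes had: "hadamard_space TYPE('a)" and sep: "separable_space TYPE('a)"
    and G: "G \<in> sets M"
    and fm: "(\<lambda>(e, y). fr e y) \<in> borel_measurable (M \<Otimes>\<^sub>M borel)"
    and lam: "lam > 0"
    and hc: "\<And>e. e \<in> G \<Longrightarrow> gconv (fr e)"
    and lip: "\<And>e. e \<in> G \<Longrightarrow> \<exists>K\<ge>0. \<forall>u v. \<bar>fr e u - fr e v\<bar> \<le> K * dist u v"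
  shows "(\<lambda>(e, x). if e \<in> G then (THE p. \<forall>w. fr e p + (dist x p)\<^sup>2 / (2 * lam) \<le> fr e w + (dist x w)\<^sup>2 / (2 * lam)) else x0)
      \<in> measurable (M \<Otimes>\<^sub>M borel) borel"
proof -
  obtain D :: "'a set" where D: "countable D" "closure D = UNIV"
    using sep unfolding separable_space_def by blast
  have Dne: "D \<noteq> {}" using D(2) by auto
  define dd where "dd = from_nat_into D"
  have dd: "range dd = D" unfolding dd_def using Dne D(1) by simp
  have dense: "\<exists>i. dist (dd i) y < r" if r: "r > 0" for y r
  proof -
    have "y \<in> closure D" using D(2) by simp
    then obtain d where "d \<in> D" "dist d y < r" using r unfolding closure_approachable by blast
    then show ?thesis using dd by blast
  qed
  define \<Phi> where "\<Phi> e x w = fr e w + (dist x w)\<^sup>2 / (2 * lam)" for e x w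
  define P where "P e x = (THE p. \<forall>w. \<Phi> e x p \<le> \<Phi> e x w)" for e x
  have Pmin: "\<Phi> e x (P e x) \<le> \<Phi> e x w" if e: "e \<in> G" for e x w
  proof -
    obtain K where K: "K \<ge> 0" "\<And>u v. \<bar>fr e u - fr e v\<bar> \<le> K * dist u v" using lip[OF e] by blast
    obtain p where p: "\<And>w. \<Phi> e x p \<le> \<Phi> e x w"
      using prox_exists[OF had hc[OF e] lam K, of x] unfolding \<Phi>_def by blast
    have "\<exists>!p. \<forall>w. \<Phi> e x p \<le> \<Phi> e x w"
    proof (rule ex1I[of _ p])
      show "\<forall>w. \<Phi> e x p \<le> \<Phi> e x w" using p by blast
      fix q assume q: "\<forall>w. \<Phi> e x q \<le> \<Phi> e x w"
      show "q = p" using prox_unique[OF had hc[OF e] lam, of q x p] q p unfolding \<Phi>_def by blast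
    qed
    from theI'[OF this] show ?thesis unfolding P_def by blast
  qed
  have Pineq: "(dist (P e x) y)\<^sup>2 \<le> 2 * lam * (\<Phi> e x y - \<Phi> e x (P e x))" if e: "e \<in> G" for e x y
  proof -
    have "(dist (P e x) y)\<^sup>2 \<le> (dist x y)\<^sup>2 - (dist x (P e x))\<^sup>2 + 2 * lam * (fr e y - fr e (P e x))"
      by (rule prox_ineq[OF had hc[OF e] lam Pmin[OF e, unfolded \<Phi>_def]])
    also have "\<dots> = 2 * lam * (\<Phi> e x y - \<Phi> e x (P e x))"
      using lam unfolding \<Phi>_def by (simp add: field_simps)
    finally show ?thesis .
  qed
  have Pcont: "isCont (\<Phi> e x) p" if e: "e \<in> G" for e x p
  proof -
    obtain K where K: "K \<ge> 0" "\<And>u v. \<bar>fr e u - fr e v\<bar> \<le> K * dist u v" using lip[OF e] by blast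
    show ?thesis unfolding \<Phi>_def using lam
      by (intro continuous_intros lip_isCont[OF K]) auto
  qed
  have approx: "\<exists>i. \<Phi> e x (dd i) < \<Phi> e x p + c \<and> dist (dd i) p < c" if e: "e \<in> G" and c: "c > 0" for e x p c
  proof -
    have "\<exists>\<delta>>0. \<forall>y. dist y p < \<delta> \<longrightarrow> dist (\<Phi> e x y) (\<Phi> e x p) < c"
      using Pcont[OF e, where x=x and p=p] c unfolding continuous_at_eps_delta by simp
    then obtain \<delta> where \<delta>: "\<delta> > 0" "\<And>y. dist y p < \<delta> \<Longrightarrow> dist (\<Phi> e x y) (\<Phi> e x p) < c"
      by blast
    obtain i where i: "dist (dd i) p < min \<delta> c" using dense[of "min \<delta> c" p] \<delta>(1) c by auto
    then have "dist (\<Phi> e x (dd i)) (\<Phi> e x p) < c" using \<delta>(2) by simp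
    then have "\<Phi> e x (dd i) < \<Phi> e x p + c" unfolding dist_real_def by linarith
    moreover have "dist (dd i) p < c" using i by simp
    ultimately show ?thesis by blast
  qed
  have char: "P e x \<in> C \<longleftrightarrow> (\<forall>k::nat. \<exists>i. infdist (dd i) C < 1 / Suc k \<and> (\<forall>j. \<Phi> e x (dd i) \<le> \<Phi> e x (dd j) + 1 / Suc k))"
    if e: "e \<in> G" and C: "closed C" "C \<noteq> {}" for e x C
  proof
    assume pC: "P e x \<in> C"
    show "\<forall>k::nat. \<exists>i. infdist (dd i) C < 1 / Suc k \<and> (\<forall>j. \<Phi> e x (dd i) \<le> \<Phi> e x (dd j) + 1 / Suc k)"
    proof
      fix k :: nat
      obtain i where i: "\<Phi> e x (dd i) < \<Phi> e x (P e x) + 1 / Suc k" "dist (dd i) (P e x) < 1 / Suc k"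
        using approx[OF e, of "1 / Suc k" x "P e x"] by auto
      have "infdist (dd i) C < 1 / Suc k" using infdist_le[OF pC, of "dd i"] i(2) by linarith
      moreover have "\<Phi> e x (dd i) \<le> \<Phi> e x (dd j) + 1 / Suc k" for j
        using i(1) Pmin[OF e, of x "dd j"] by linarith
      ultimately show "\<exists>i. infdist (dd i) C < 1 / Suc k \<and> (\<forall>j. \<Phi> e x (dd i) \<le> \<Phi> e x (dd j) + 1 / Suc k)"
        by blast
    qed
  next
    assume R: "\<forall>k::nat. \<exists>i. infdist (dd i) C < 1 / Suc k \<and> (\<forall>j. \<Phi> e x (dd i) \<le> \<Phi> e x (dd j) + 1 / Suc k)"
    let ?p = "P e x"
    have "infdist ?p C \<le> \<eta>" if \<eta>: "\<eta> > 0" for \<eta>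
    proof -
      define c0 where "c0 = min (\<eta> / 2) (\<eta>\<^sup>2 / (8 * lam))"
      have c0: "c0 > 0" using \<eta> lam by (simp add: c0_def)
      obtain k :: nat where "inverse (real (Suc k)) < c0"
        using reals_Archimedean[OF c0] by blast
      then have k: "1 / Suc k < c0" by (simp add: inverse_eq_divide)
      obtain i where i: "infdist (dd i) C < 1 / Suc k" "\<And>j. \<Phi> e x (dd i) \<le> \<Phi> e x (dd j) + 1 / Suc k"
        using R by blast
      have le: "\<Phi> e x (dd i) \<le> \<Phi> e x ?p + 1 / Suc k"
      proof (rule field_le_epsilon)
        fix r :: real assume r: "r > 0"
        obtain j where "\<Phi> e x (dd j) < \<Phi> e x ?p + r" using approx[OF e r, of x ?p] by blast
        then show "\<Phi> e x (dd i) \<le> \<Phi> e x ?p + 1 / Suc k + r" using i(2)[of j] by linarith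
      qed
      have "(dist ?p (dd i))\<^sup>2 \<le> 2 * lam * (\<Phi> e x (dd i) - \<Phi> e x ?p)" by (rule Pineq[OF e])
      also have "\<dots> \<le> 2 * lam * (1 / Suc k)" using le lam by (intro mult_left_mono) auto
      also have "\<dots> < 2 * lam * (\<eta>\<^sup>2 / (8 * lam))" using k lam unfolding c0_def by (intro mult_strict_left_mono) auto
      also have "\<dots> = (\<eta> / 2)\<^sup>2" using lam by (simp add: field_simps power2_eq_square)
      finally have "(dist ?p (dd i))\<^sup>2 < (\<eta> / 2)\<^sup>2" .
      then have "dist ?p (dd i) < \<eta> / 2" by (rule power_less_imp_less_base) (use \<eta> in simp)
      moreover have "infdist (dd i) C < \<eta> / 2" using i(1) k unfolding c0_def by linarith
      moreover have "infdist ?p C \<le> infdist (dd i) C + dist ?p (dd i)" by (rule infdist_triangle)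
      ultimately show ?thesis by linarith
    qed
    then have "infdist ?p C \<le> 0" using field_le_epsilon[of "infdist ?p C" 0] by simp
    then have "infdist ?p C = 0" using infdist_nonneg[of ?p C] by linarith
    then show "?p \<in> C" using in_closed_iff_infdist_zero[OF C] by simp
  qed
  have Gsp: "G \<subseteq> space M" using G sets.sets_into_space by blast
  define F where "F = (\<lambda>(e, x). if e \<in> G then P e x else x0)"
  have fr_meas: "(\<lambda>w. fr (fst w) y) \<in> borel_measurable (M \<Otimes>\<^sub>M borel)" for y
    using measurable_Pair_compose_split[OF fm measurable_fst measurable_const] by simp
  have dist_meas: "(\<lambda>w. dist (snd w) y) \<in> borel_measurable (M \<Otimes>\<^sub>M borel)" for y :: 'a
  proof -
    have "(\<lambda>x. dist x y) \<in> borel_measurable borel"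
      by (intro borel_measurable_continuous_onI continuous_intros)
    from measurable_compose[OF measurable_snd this] show ?thesis .
  qed
  have Phi_meas[measurable]: "(\<lambda>w. \<Phi> (fst w) (snd w) y) \<in> borel_measurable (M \<Otimes>\<^sub>M borel)" for y
    unfolding \<Phi>_def using fr_meas dist_meas by measurable
  have G_meas[measurable]: "Measurable.pred (M \<Otimes>\<^sub>M borel) (\<lambda>w. fst w \<in> G)"
    using G by measurable
  have Fmeas': "F \<in> measurable (M \<Otimes>\<^sub>M borel) (sigma UNIV (Collect closed))"
  proof (rule measurable_measure_of)
    fix C :: "'a set" assume "C \<in> Collect closed"
    then have C: "closed C" by simp
    show "F -` C \<inter> space (M \<Otimes>\<^sub>M borel) \<in> sets (M \<Otimes>\<^sub>M borel)"
    proof (cases "C = {}")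
      case True then show ?thesis by simp
    next
      case False
      let ?Q = "\<lambda>w. fst w \<in> G \<and> (\<forall>k::nat. \<exists>i. infdist (dd i) C < 1 / Suc k \<and>
                 (\<forall>j. \<Phi> (fst w) (snd w) (dd i) \<le> \<Phi> (fst w) (snd w) (dd j) + 1 / Suc k))"
      have Qm: "Measurable.pred (M \<Otimes>\<^sub>M borel) ?Q" by measurable
      have Rm: "Measurable.pred (M \<Otimes>\<^sub>M borel) (\<lambda>w. \<not> fst w \<in> G \<and> x0 \<in> C)" by measurable
      have "F -` C \<inter> space (M \<Otimes>\<^sub>M borel) = {w \<in> space (M \<Otimes>\<^sub>M borel). ?Q w} \<union>
          {w \<in> space (M \<Otimes>\<^sub>M borel). \<not> fst w \<in> G \<and> x0 \<in> C}"
        using char[OF _ C False] by (auto simp: F_def split: if_splits)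
      also have "\<dots> \<in> sets (M \<Otimes>\<^sub>M borel)" using Qm Rm by (intro sets.Un) (auto simp: pred_def)
      finally show ?thesis .
    qed
  qed auto
  have Fmeas: "F \<in> measurable (M \<Otimes>\<^sub>M borel) borel"
    using Fmeas' by (simp add: borel_eq_closed[symmetric])
  have "(\<lambda>(e, x). if e \<in> G then (THE p. \<forall>w. fr e p + (dist x p)\<^sup>2 / (2 * lam) \<le> fr e w + (dist x w)\<^sup>2 / (2 * lam)) else x0) = F"
    unfolding F_def P_def \<Phi>_def by simp
  with Fmeas show ?thesis by simp
qed


lemma ereal_integral_eq:
  fixes h :: "'e \<Rightarrow> real"
  assumes h: "integrable M h" and g: "AE e in M. g e = ereal (h e)"
  shows "ereal_integral M g = ereal (\<integral>e. h e \<partial>M)"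
proof -
  have p: "(\<integral>\<^sup>+ e. e2ennreal (g e) \<partial>M) = ennreal (\<integral>e. max (h e) 0 \<partial>M)"
  proof -
    have "(\<integral>\<^sup>+ e. e2ennreal (g e) \<partial>M) = (\<integral>\<^sup>+ e. ennreal (max (h e) 0) \<partial>M)"
      using g by (intro nn_integral_cong_AE) (auto simp: ennreal_max_0)
    also have "\<dots> = ennreal (\<integral>e. max (h e) 0 \<partial>M)"
      using h by (intro nn_integral_eq_integral) auto
    finally show ?thesis .
  qed
  have hm': "integrable M (\<lambda>e. - h e)" using h by simp
  have n: "(\<integral>\<^sup>+ e. e2ennreal (- g e) \<partial>M) = ennreal (\<integral>e. max (- h e) 0 \<partial>M)"
  proof -
    have "(\<integral>\<^sup>+ e. e2ennreal (- g e) \<partial>M) = (\<integral>\<^sup>+ e. ennreal (max (- h e) 0) \<partial>M)"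
      using g by (intro nn_integral_cong_AE) (auto simp: ennreal_max_0)
    also have "\<dots> = ennreal (\<integral>e. max (- h e) 0 \<partial>M)"
      by (intro nn_integral_eq_integral integrable_max[OF hm' integrable_zero]) auto
    finally show ?thesis .
  qed
  have hm: "integrable M (\<lambda>e. - h e)" using h by simp
  have im1: "integrable M (\<lambda>e. max (h e) 0)" by (rule integrable_max[OF h integrable_zero])
  have im2: "integrable M (\<lambda>e. max (- h e) 0)" by (rule integrable_max[OF hm integrable_zero])
  have i1: "0 \<le> (\<integral>e. max (h e) 0 \<partial>M)" "0 \<le> (\<integral>e. max (- h e) 0 \<partial>M)" by auto
  have "(\<integral>e. h e \<partial>M) = (\<integral>e. max (h e) 0 - max (- h e) 0 \<partial>M)"
    by (rule Bochner_Integration.integral_cong) (auto simp: max_def)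
  also have "\<dots> = (\<integral>e. max (h e) 0 \<partial>M) - (\<integral>e. max (- h e) 0 \<partial>M)"
    by (rule Bochner_Integration.integral_diff[OF im1 im2])
  finally have eq: "(\<integral>e. h e \<partial>M) = (\<integral>e. max (h e) 0 \<partial>M) - (\<integral>e. max (- h e) 0 \<partial>M)" .
  show ?thesis unfolding ereal_integral_def Let_def p n using i1 eq by simp
qed

lemma ereal_integral_integrable:
  fixes g :: "'e \<Rightarrow> ereal"
  assumes gm: "g \<in> borel_measurable M" and ni: "ereal_integral M g \<noteq> \<infinity>" and nm: "ereal_integral M g \<noteq> -\<infinity>"
  shows "integrable M (\<lambda>e. real_of_ereal (g e))"
proof -
  define p where "p = (\<integral>\<^sup>+ e. e2ennreal (g e) \<partial>M)"
  define n where "n = (\<integral>\<^sup>+ e. e2ennreal (- g e) \<partial>M)"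
  have "enn2ereal p \<noteq> \<infinity>" using ni unfolding ereal_integral_def Let_def p_def by auto
  then have pf: "p \<noteq> top" by simp
  have "enn2ereal p - enn2ereal n \<noteq> -\<infinity>" using nm pf unfolding ereal_integral_def Let_def p_def n_def by auto
  then have "enn2ereal n \<noteq> \<infinity>" using pf by (cases "enn2ereal p") auto
  then have nf: "n \<noteq> top" by simp
  have bound: "ennreal (norm (real_of_ereal (g e))) \<le> e2ennreal (g e) + e2ennreal (- g e)" for e
  proof (cases "g e")
    case (real r)
    then show ?thesis
      by (cases "r \<ge> 0") (auto simp: e2ennreal_neg)
  qed auto
  have "(\<integral>\<^sup>+ e. ennreal (norm (real_of_ereal (g e))) \<partial>M) \<le> (\<integral>\<^sup>+ e. e2ennreal (g e) + e2ennreal (- g e) \<partial>M)"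
    by (intro nn_integral_mono bound)
  also have "\<dots> = p + n" unfolding p_def n_def using gm by (intro nn_integral_add) auto
  also have "\<dots> < \<infinity>" using pf nf by (simp add: less_top)
  finally show ?thesis using gm by (intro integrableI_bounded) auto
qed

definition proxr :: "('a::metric_space \<Rightarrow> real) \<Rightarrow> real \<Rightarrow> 'a \<Rightarrow> 'a" where
  "proxr h lam x = (THE p. \<forall>w. h p + (dist x p)\<^sup>2 / (2 * lam) \<le> h w + (dist x w)\<^sup>2 / (2 * lam))"

lemma proxr_ex1:
  fixes h :: "'a::metric_space \<Rightarrow> real"
  assumes had: "hadamard_space TYPE('a)" and hc: "gconv h" and lam: "lam > 0"
    and K: "K \<ge> 0" and lip: "\<And>u v. \<bar>h u - h v\<bar> \<le> K * dist u v"
  shows "\<exists>!p. \<forall>w. h p + (dist x p)\<^sup>2 / (2 * lam) \<le> h w + (dist x w)\<^sup>2 / (2 * lam)"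
proof -
  obtain p where p: "\<forall>w. h p + (dist x p)\<^sup>2 / (2 * lam) \<le> h w + (dist x w)\<^sup>2 / (2 * lam)"
    using prox_exists[OF had hc lam K lip, of x] by blast
  show ?thesis
  proof (rule ex1I[of _ p])
    show "\<forall>w. h p + (dist x p)\<^sup>2 / (2 * lam) \<le> h w + (dist x w)\<^sup>2 / (2 * lam)" by fact
    fix q assume q: "\<forall>w. h q + (dist x q)\<^sup>2 / (2 * lam) \<le> h w + (dist x w)\<^sup>2 / (2 * lam)"
    show "q = p" using prox_unique[OF had hc lam, of q x p] q p by blast
  qed
qed

lemma proxr_min:
  fixes h :: "'a::metric_space \<Rightarrow> real"
  assumes had: "hadamard_space TYPE('a)" and hc: "gconv h" and lam: "lam > 0"
    and K: "K \<ge> 0" and lip: "\<And>u v. \<bar>h u - h v\<bar> \<le> K * dist u v"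
  shows "h (proxr h lam x) + (dist x (proxr h lam x))\<^sup>2 / (2 * lam) \<le> h w + (dist x w)\<^sup>2 / (2 * lam)"
  using theI'[OF proxr_ex1[OF had hc lam K lip, of x]] unfolding proxr_def by blast

lemma proxr_unique:
  fixes h :: "'a::metric_space \<Rightarrow> real"
  assumes had: "hadamard_space TYPE('a)" and hc: "gconv h" and lam: "lam > 0"
    and K: "K \<ge> 0" and lip: "\<And>u v. \<bar>h u - h v\<bar> \<le> K * dist u v"
    and q: "\<And>w. h q + (dist x q)\<^sup>2 / (2 * lam) \<le> h w + (dist x w)\<^sup>2 / (2 * lam)"
  shows "q = proxr h lam x"
  using prox_unique[OF had hc lam q proxr_min[OF had hc lam K lip]] .

lemma proxr_step:
  fixes h :: "'a::metric_space \<Rightarrow> real"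
  assumes had: "hadamard_space TYPE('a)" and hc: "gconv h" and lam: "lam > 0"
    and K: "K \<ge> 0" and lip: "\<And>u v. \<bar>h u - h v\<bar> \<le> K * dist u v"
  shows "(dist (proxr h lam x) z)\<^sup>2 \<le> (dist x z)\<^sup>2 - 2 * lam * (h x - h z) + lam\<^sup>2 * K\<^sup>2"
proof -
  define p where "p = proxr h lam x"
  define a where "a = dist x p"
  have i1: "(dist p z)\<^sup>2 \<le> (dist x z)\<^sup>2 - a\<^sup>2 + 2 * lam * (h z - h p)"
    unfolding a_def p_def
    by (rule prox_ineq[OF had hc lam proxr_min[OF had hc lam K lip]])
  have i2: "h x - h p \<le> K * a" using lip[of x p] unfolding a_def by simp
  have i3: "2 * lam * (h x - h p) \<le> 2 * lam * (K * a)" using i2 lam by simp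
  have i4: "0 \<le> (a - lam * K)\<^sup>2" by simp
  have i5: "(a - lam * K)\<^sup>2 = a\<^sup>2 - 2 * lam * (K * a) + lam\<^sup>2 * K\<^sup>2" by (simp add: power2_eq_square algebra_simps)
  have "(dist p z)\<^sup>2 \<le> (dist x z)\<^sup>2 - a\<^sup>2 + 2 * lam * (h x - h p) - 2 * lam * (h x - h z)"
    using i1 by (simp add: algebra_simps)
  then show ?thesis unfolding p_def[symmetric] using i3 i4 i5 by linarith
qed


theorem lemma5p6:
  fixes M :: "'e measure" and P :: "'w measure"
    and f :: "'e \<Rightarrow> 'a::metric_space \<Rightarrow> ereal"
    and x0 :: 'a and lam :: "nat \<Rightarrow> real"
    and \<xi> :: "nat \<Rightarrow> 'w \<Rightarrow> 'e" and x :: "nat \<Rightarrow> 'w \<Rightarrow> 'a"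
    and L :: "'e \<Rightarrow> real" and z :: 'a and b T :: real
    and \<theta> :: "nat \<Rightarrow> real \<Rightarrow> nat"
  assumes "prob_space M" and "complete_measure M" and "prob_space P"
    and "hadamard_space TYPE('a)" and "separable_space TYPE('a)"
    and "normal_convex_integrand M f"
    and "proper_fun (integral_fun M f)"
    and "argmin_set (integral_fun M f) \<noteq> {}"
    and "\<And>n. lam n > 0" and "\<not> summable lam" and "summable (\<lambda>n. (lam n)\<^sup>2)"
    and "\<And>n. \<xi> (Suc n) \<in> measurable P M"
    and "prob_space.indep_vars P (\<lambda>_. M) (\<lambda>n. \<xi> (Suc n)) UNIV"
    and "\<And>n. distr P M (\<xi> (Suc n)) = M"
    and "\<And>\<omega>. \<omega> \<in> space P \<Longrightarrow> x 0 \<omega> = x0"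
    and "\<And>n \<omega>. \<omega> \<in> space P \<Longrightarrow> x (Suc n) \<omega> \<in> prox f (lam n) (\<xi> (Suc n) \<omega>) (x n \<omega>)"
    and "\<And>e. e \<in> space M \<Longrightarrow> L e > 0"
    and "L \<in> borel_measurable M" and "integrable M (\<lambda>e. (L e)\<^sup>2)"
    and "AE e in M. \<forall>u v. f e u \<le> f e v + ereal (L e * dist u v)"
    and "z \<in> argmin_set (integral_fun M f)"
    and "b > (dist x0 z)\<^sup>2"
    and "\<And>b' k. b' > 0 \<Longrightarrow> (\<Sum>n = k..\<theta> k b'. lam n) \<ge> b'"
    and "T > (\<Sum>n. (lam n)\<^sup>2)"
  shows "\<forall>\<epsilon>>0. \<forall>N. \<exists>n. N \<le> n \<and>
           n \<le> \<theta> N ((b + 4 * (\<integral>e. (L e)\<^sup>2 \<partial>M) * T) / \<epsilon>) \<and>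
           (\<integral>\<^sup>+ \<omega>. e2ennreal (integral_fun M f (x n \<omega>) - integral_fun M f z) \<partial>P) < ennreal \<epsilon>"
proof -
  interpret M: prob_space M by (rule assms(1))
  interpret P: prob_space P by (rule assms(3))
  note had = assms(4) and sep = assms(5)
  have fmeas: "(\<lambda>(e, x). f e x) \<in> borel_measurable (M \<Otimes>\<^sub>M borel)"
    and fprop: "\<And>e. e \<in> space M \<Longrightarrow> proper_fun (f e) \<and> lsc_fun (f e) \<and> geod_convex (f e)"
    using assms(6) unfolding normal_convex_integrand_def by auto
  obtain N where N: "{e \<in> space M. \<not> (\<forall>u v. f e u \<le> f e v + ereal (L e * dist u v))} \<subseteq> N"
    "emeasure M N = 0" "N \<in> sets M"
    using AE_E[OF assms(20)] by blast
  define G where "G = space M - N"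
  have Gs: "G \<in> sets M" unfolding G_def using N(3) by auto
  have AEG: "AE e in M. e \<in> G"
    using N unfolding G_def by (intro AE_I[of _ _ N]) auto
  have GM: "e \<in> space M" if "e \<in> G" for e using that unfolding G_def by auto
  have Glip: "f e u \<le> f e v + ereal (L e * dist u v)" if "e \<in> G" for e u v
    using that N(1) unfolding G_def by blast
  have Lpos: "L e > 0" if "e \<in> G" for e using assms(17) GM that by blast
  define fr where "fr e y = real_of_ereal (f e y)" for e y
  have Gfin: "f e y = ereal (fr e y)" if e: "e \<in> G" for e y
  proof -
    have pr: "proper_fun (f e)" using fprop GM[OF e] by blast
    then obtain y0 where y0: "f e y0 \<noteq> \<infinity>" unfolding proper_fun_def by blast
    have y0': "f e y0 \<noteq> -\<infinity>" using pr unfolding proper_fun_def by blast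
    have ym: "f e y \<noteq> -\<infinity>" using pr unfolding proper_fun_def by blast
    have "f e y \<le> f e y0 + ereal (L e * dist y y0)" by (rule Glip[OF e])
    then have "f e y \<noteq> \<infinity>" using y0 y0' by auto
    with ym show ?thesis unfolding fr_def by (cases "f e y") auto
  qed
  have Gabs: "\<bar>fr e u - fr e v\<bar> \<le> L e * dist u v" if e: "e \<in> G" for e u v
  proof -
    have "fr e u \<le> fr e v + L e * dist u v" using Glip[OF e, of u v] Gfin[OF e] by simp
    moreover have "fr e v \<le> fr e u + L e * dist v u" using Glip[OF e, of v u] Gfin[OF e] by simp
    ultimately show ?thesis by (simp add: dist_commute abs_le_iff)
  qed
  have Gconv: "gconv (fr e)" if e: "e \<in> G" for e
    unfolding gconv_def
  proof (intro allI impI)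
    fix \<gamma> :: "real \<Rightarrow> 'a" and l t :: real assume g: "geodesic \<gamma> l" and t: "t \<in> {0..1}"
    have "f e (\<gamma> (t * l)) \<le> ereal (1 - t) * f e (\<gamma> 0) + ereal t * f e (\<gamma> l)"
      using fprop[OF GM[OF e]] g t unfolding geod_convex_def by blast
    then show "fr e (\<gamma> (t * l)) \<le> (1 - t) * fr e (\<gamma> 0) + t * fr e (\<gamma> l)"
      using Gfin[OF e] by simp
  qed
  have frmeas: "(\<lambda>(e, y). fr e y) \<in> borel_measurable (M \<Otimes>\<^sub>M borel)"
  proof -
    have "(\<lambda>w. real_of_ereal ((\<lambda>(e, x). f e x) w)) \<in> borel_measurable (M \<Otimes>\<^sub>M borel)"
      using fmeas by measurable
    moreover have "(\<lambda>w. real_of_ereal ((\<lambda>(e, x). f e x) w)) = (\<lambda>(e, y). fr e y)"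
      by (auto simp: fr_def fun_eq_iff)
    ultimately show ?thesis by simp
  qed
  have fr1meas: "(\<lambda>e. fr e y) \<in> borel_measurable M" for y
    by (rule measurable_Pair_compose_split[OF frmeas]) simp_all
  have f1meas: "(\<lambda>e. f e y) \<in> borel_measurable M" for y
    by (rule measurable_Pair_compose_split[OF fmeas]) simp_all
  have L2int: "integrable M (\<lambda>e. (L e)\<^sup>2)" by (rule assms(19))
  have Lint: "integrable M L"
  proof (rule Bochner_Integration.integrable_bound[of _ "\<lambda>e. 1 + (L e)\<^sup>2"])
    show "integrable M (\<lambda>e. 1 + (L e)\<^sup>2)" using L2int by simp
    show "L \<in> borel_measurable M" by (rule assms(18))
    have "norm (L e) \<le> norm (1 + (L e)\<^sup>2)" for e
    proof (cases "\<bar>L e\<bar> \<le> 1")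
      case True then show ?thesis by (simp add: add_increasing2)
    next
      case False
      then have "1 \<le> \<bar>L e\<bar>" by simp
      from mult_left_mono[OF this abs_ge_zero[of "L e"]]
      have "\<bar>L e\<bar> \<le> \<bar>L e\<bar> * \<bar>L e\<bar>" by simp
      also have "\<bar>L e\<bar> * \<bar>L e\<bar> = (L e)\<^sup>2" by (simp add: abs_mult[symmetric] power2_eq_square)
      finally show ?thesis by simp
    qed
    then show "AE e in M. norm (L e) \<le> norm (1 + (L e)\<^sup>2)" by simp
  qed
  define I where "I = integral_fun M f"
  obtain y0 where y0: "I y0 \<noteq> \<infinity>" using assms(7) unfolding proper_fun_def I_def by blast
  have Inm: "I y \<noteq> -\<infinity>" for y using assms(7) unfolding proper_fun_def I_def by blast
  have zmin: "I z \<le> I y" for y using assms(21) unfolding argmin_set_def I_def by blast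
  have Izfin: "I z \<noteq> \<infinity>" using zmin[of y0] y0 by auto
  have frz: "integrable M (\<lambda>e. fr e z)"
    unfolding fr_def
    by (rule ereal_integral_integrable[OF f1meas]) (use Izfin Inm[of z] in \<open>auto simp: I_def integral_fun_def\<close>)
  have frint: "integrable M (\<lambda>e. fr e y)" for y
  proof (rule Bochner_Integration.integrable_bound[of _ "\<lambda>e. \<bar>fr e z\<bar> + L e * dist y z"])
    show "integrable M (\<lambda>e. \<bar>fr e z\<bar> + L e * dist y z)" using frz Lint by simp
    show "(\<lambda>e. fr e y) \<in> borel_measurable M" by (rule fr1meas)
    show "AE e in M. norm (fr e y) \<le> norm (\<bar>fr e z\<bar> + L e * dist y z)"
      using AEG
    proof eventually_elim
      case (elim e)
      have "\<bar>fr e y\<bar> \<le> \<bar>fr e z\<bar> + \<bar>fr e y - fr e z\<bar>" by simp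
      also have "\<dots> \<le> \<bar>fr e z\<bar> + L e * dist y z" using Gabs[OF elim] by simp
      finally show ?case using Lpos[OF elim] by simp
    qed
  qed
  have Ieq: "I y = ereal (\<integral>e. fr e y \<partial>M)" for y
    unfolding I_def integral_fun_def
    by (rule ereal_integral_eq[OF frint]) (use AEG Gfin in auto)
  define Fr where "Fr y = (\<integral>e. fr e y - fr e z \<partial>M)" for y
  have FrI: "I y - I z = ereal (Fr y)" for y
    unfolding Ieq Fr_def using frint[of y] frz by simp
  have Fr0: "Fr y \<ge> 0" for y using zmin[of y] FrI[of y] Ieq by (auto simp: Fr_def)
  define Lm where "Lm = (\<integral>e. L e \<partial>M)"
  have Frb: "Fr y \<le> Lm * dist y z" for y
  proof -
    have "Fr y \<le> (\<integral>e. L e * dist y z \<partial>M)"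
      unfolding Fr_def
    proof (rule integral_mono_AE)
      show "integrable M (\<lambda>e. fr e y - fr e z)" using frint frz by simp
      show "integrable M (\<lambda>e. L e * dist y z)" using Lint by simp
      show "AE e in M. fr e y - fr e z \<le> L e * dist y z"
        using AEG by eventually_elim (use Gabs in \<open>fastforce simp: abs_le_iff\<close>)
    qed
    then show ?thesis by (simp add: Lm_def)
  qed
  have Frmeas: "Fr \<in> borel_measurable borel"
  proof -
    have "(\<lambda>(y, e). fr e y - fr e z) \<in> borel_measurable (borel \<Otimes>\<^sub>M M)"
    proof -
      have a: "(\<lambda>w. fr (snd w) (fst w)) \<in> borel_measurable (borel \<Otimes>\<^sub>M M)"
        using measurable_Pair_compose_split[OF frmeas measurable_snd measurable_fst] .
      have b: "(\<lambda>w. fr (snd w) z) \<in> borel_measurable (borel \<Otimes>\<^sub>M M)"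
        using measurable_compose[OF measurable_snd fr1meas] .
      have "(\<lambda>w. fr (snd w) (fst w) - fr (snd w) z) \<in> borel_measurable (borel \<Otimes>\<^sub>M M)"
        using a b by (rule borel_measurable_diff)
      then show ?thesis by (simp add: case_prod_beta')
    qed
    from M.borel_measurable_lebesgue_integral[OF this] show ?thesis unfolding Fr_def by simp
  qed
  have Lnn: "L e \<ge> 0" if "e \<in> G" for e using Lpos[OF that] by simp
  have GK: "\<exists>K\<ge>0. \<forall>u v. \<bar>fr e u - fr e v\<bar> \<le> K * dist u v" if e: "e \<in> G" for e
    using Lnn[OF e] Gabs[OF e] by blast
  define Pr where "Pr n = (\<lambda>(e, x). if e \<in> G then proxr (fr e) (lam n) x else x0)" for n
  have Prmeas: "Pr n \<in> measurable (M \<Otimes>\<^sub>M borel) borel" for n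
    using prox_meas[OF had sep Gs frmeas assms(9)[of n] Gconv GK, of x0]
    unfolding Pr_def proxr_def by simp
  have PrG: "Pr n (e, x) = proxr (fr e) (lam n) x" if "e \<in> G" for n e x
    using that unfolding Pr_def by simp
  have Prstep: "(dist (Pr n (e, x)) z)\<^sup>2 \<le> (dist x z)\<^sup>2 - 2 * lam n * (fr e x - fr e z) + (lam n)\<^sup>2 * (L e)\<^sup>2"
    if e: "e \<in> G" for n e x
    unfolding PrG[OF e] by (rule proxr_step[OF had Gconv[OF e] assms(9) Lnn[OF e] Gabs[OF e]])
  have Prprox: "q = Pr n (e, x)" if e: "e \<in> G" and q: "q \<in> prox f (lam n) e x" for n e x q
  proof -
    have "\<forall>w. f e q + ereal ((dist x q)\<^sup>2 / (2 * lam n)) \<le> f e w + ereal ((dist x w)\<^sup>2 / (2 * lam n))"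
      using q unfolding prox_def argmin_set_def by blast
    then have "fr e q + (dist x q)\<^sup>2 / (2 * lam n) \<le> fr e w + (dist x w)\<^sup>2 / (2 * lam n)" for w
      using Gfin[OF e] by (metis plus_ereal.simps(1) ereal_less_eq(3))
    from proxr_unique[OF had Gconv[OF e] assms(9) Lnn[OF e] Gabs[OF e] this] show ?thesis
      unfolding PrG[OF e] .
  qed
  define X where "X = rec_nat (\<lambda>s. x0) (\<lambda>n Xn s. Pr n (s n, Xn s))"
  have X0: "X 0 s = x0" for s by (simp add: X_def)
  have XS: "X (Suc n) s = Pr n (s n, X n s)" for n s by (simp add: X_def)
  have Xmeas: "X n \<in> borel_measurable (PiM {..<m} (\<lambda>_. M))" if "n \<le> m" for n m
    using that
  proof (induction n)
    case 0 then show ?case by (simp add: X0)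
  next
    case (Suc n)
    have "(\<lambda>s. (s n, X n s)) \<in> measurable (PiM {..<m} (\<lambda>_. M)) (M \<Otimes>\<^sub>M borel)"
      using Suc by (intro measurable_Pair measurable_component_singleton) auto
    from measurable_compose[OF this Prmeas[of n]] show ?case by (simp add: XS)
  qed
  have Xloc: "X n s = X n s'" if "\<And>i. i < n \<Longrightarrow> s i = s' i" for n s s'
    using that by (induction n) (auto simp: X0 XS)
  define Y where "Y n \<omega> = X n (\<lambda>i\<in>{..<n}. \<xi> (Suc i) \<omega>)" for n \<omega>
  have \<xi>meas: "\<xi> (Suc i) \<in> measurable P M" for i by (rule assms(12))
  have Ymeas: "Y n \<in> borel_measurable P" for n
  proof -
    have "(\<lambda>\<omega>. \<lambda>i\<in>{..<n}. \<xi> (Suc i) \<omega>) \<in> measurable P (PiM {..<n} (\<lambda>_. M))"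
      using \<xi>meas by (intro measurable_restrict) auto
    from measurable_compose[OF this Xmeas[OF le_refl]] show ?thesis unfolding Y_def .
  qed
  have Y0: "Y 0 \<omega> = x0" for \<omega> by (simp add: Y_def X0)
  have YS: "Y (Suc n) \<omega> = Pr n (\<xi> (Suc n) \<omega>, Y n \<omega>)" for n \<omega>
  proof -
    have "X n (\<lambda>i\<in>{..<Suc n}. \<xi> (Suc i) \<omega>) = X n (\<lambda>i\<in>{..<n}. \<xi> (Suc i) \<omega>)"
      by (rule Xloc) auto
    then show ?thesis unfolding Y_def XS by simp
  qed
  have AEGP: "AE \<omega> in P. \<forall>n. \<xi> (Suc n) \<omega> \<in> G"
  proof (subst AE_all_countable, intro allI)
    fix n
    have "AE e in distr P M (\<xi> (Suc n)). e \<in> G" unfolding assms(14)[of n] by (rule AEG)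
    from AE_distrD[OF \<xi>meas this] show "AE \<omega> in P. \<xi> (Suc n) \<omega> \<in> G" .
  qed
  have xY: "AE \<omega> in P. \<forall>n. x n \<omega> = Y n \<omega>"
    using AEGP AE_space
  proof eventually_elim
    case (elim \<omega>)
    show ?case
    proof
      fix n show "x n \<omega> = Y n \<omega>"
      proof (induction n)
        case 0 then show ?case using assms(15)[OF elim(2)] Y0 by simp
      next
        case (Suc n)
        have "x (Suc n) \<omega> \<in> prox f (lam n) (\<xi> (Suc n) \<omega>) (Y n \<omega>)"
          using assms(16)[OF elim(2), of n] Suc by simp
        from Prprox[OF elim(1)[rule_format, of n] this] show ?case unfolding YS .
      qed
    qed
  qed
  have hhm: "(\<lambda>w. fr (snd w) (fst w) - fr (snd w) z) \<in> borel_measurable (borel \<Otimes>\<^sub>M M)"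
  proof -
    have a: "(\<lambda>w. fr (snd w) (fst w)) \<in> borel_measurable (borel \<Otimes>\<^sub>M M)"
      using measurable_Pair_compose_split[OF frmeas measurable_snd measurable_fst] .
    have b: "(\<lambda>w. fr (snd w) z) \<in> borel_measurable (borel \<Otimes>\<^sub>M M)"
      using measurable_compose[OF measurable_snd fr1meas] .
    show ?thesis using a b by (rule borel_measurable_diff)
  qed
  define g where "g n \<omega> = fr (\<xi> (Suc n) \<omega>) (Y n \<omega>) - fr (\<xi> (Suc n) \<omega>) z" for n \<omega>
  have gmeas: "g n \<in> borel_measurable P" for n
  proof -
    have a: "(\<lambda>\<omega>. fr (\<xi> (Suc n) \<omega>) (Y n \<omega>)) \<in> borel_measurable P"
      using measurable_Pair_compose_split[OF frmeas \<xi>meas Ymeas] .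
    have b: "(\<lambda>\<omega>. fr (\<xi> (Suc n) \<omega>) z) \<in> borel_measurable P"
      using measurable_compose[OF \<xi>meas fr1meas] .
    show ?thesis unfolding g_def using a b by (rule borel_measurable_diff)
  qed
  have d2meas: "(\<lambda>\<omega>. (dist (Y n \<omega>) z)\<^sup>2) \<in> borel_measurable P" for n
  proof -
    have "(\<lambda>y. (dist y z)\<^sup>2) \<in> borel_measurable borel"
      by (intro borel_measurable_continuous_onI continuous_intros)
    from measurable_compose[OF Ymeas this] show ?thesis .
  qed
  have L2meas: "(\<lambda>e. (L e)\<^sup>2) \<in> borel_measurable M" using assms(18) by measurable
  have L2xi: "integrable P (\<lambda>\<omega>. (L (\<xi> (Suc n) \<omega>))\<^sup>2)" for n
    using integrable_distr_eq[OF \<xi>meas L2meas] L2int unfolding assms(14) by simp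
  define Lb where "Lb = (\<integral>e. (L e)\<^sup>2 \<partial>M)"
  have L2xiI: "(\<integral>\<omega>. (L (\<xi> (Suc n) \<omega>))\<^sup>2 \<partial>P) = Lb" for n
    using integral_distr[OF \<xi>meas L2meas] unfolding assms(14) Lb_def by simp
  have stepAE: "AE \<omega> in P. (dist (Y (Suc n) \<omega>) z)\<^sup>2 \<le> (dist (Y n \<omega>) z)\<^sup>2 - 2 * lam n * g n \<omega> + (lam n)\<^sup>2 * (L (\<xi> (Suc n) \<omega>))\<^sup>2" for n
    using AEGP by eventually_elim (simp add: YS g_def Prstep)
  have gbAE: "AE \<omega> in P. \<bar>g n \<omega>\<bar> \<le> ((L (\<xi> (Suc n) \<omega>))\<^sup>2 + (dist (Y n \<omega>) z)\<^sup>2) / 2" for n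
    using AEGP
  proof eventually_elim
    case (elim \<omega>)
    let ?e = "\<xi> (Suc n) \<omega>" and ?d = "dist (Y n \<omega>) z"
    have "\<bar>g n \<omega>\<bar> \<le> L ?e * ?d" unfolding g_def using Gabs[OF elim[rule_format, of n]] .
    moreover have "0 \<le> (L ?e - ?d)\<^sup>2" by simp
    moreover have "(L ?e - ?d)\<^sup>2 = (L ?e)\<^sup>2 + ?d\<^sup>2 - 2 * (L ?e * ?d)" by (simp add: power2_eq_square algebra_simps)
    ultimately have "2 * \<bar>g n \<omega>\<bar> \<le> (L ?e)\<^sup>2 + ?d\<^sup>2" by linarith
    then show ?case by simp
  qed
  have Dint: "integrable P (\<lambda>\<omega>. (dist (Y n \<omega>) z)\<^sup>2)" for n
  proof (induction n)
    case 0 then show ?case by (simp add: Y0)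
  next
    case (Suc n)
    let ?B = "\<lambda>\<omega>. (dist (Y n \<omega>) z)\<^sup>2 + lam n * ((L (\<xi> (Suc n) \<omega>))\<^sup>2 + (dist (Y n \<omega>) z)\<^sup>2) + (lam n)\<^sup>2 * (L (\<xi> (Suc n) \<omega>))\<^sup>2"
    show ?case
    proof (rule Bochner_Integration.integrable_bound[of _ ?B])
      show "integrable P ?B" using Suc L2xi[of n] by simp
      show "(\<lambda>\<omega>. (dist (Y (Suc n) \<omega>) z)\<^sup>2) \<in> borel_measurable P" by (rule d2meas)
      show "AE \<omega> in P. norm ((dist (Y (Suc n) \<omega>) z)\<^sup>2) \<le> norm (?B \<omega>)"
        using stepAE[of n] gbAE[of n]
      proof eventually_elim
        case (elim \<omega>)
        have l: "lam n > 0" by (rule assms(9))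
        have "2 * lam n * (- g n \<omega>) \<le> 2 * lam n * \<bar>g n \<omega>\<bar>" using l by (intro mult_left_mono) auto
        then have "- 2 * lam n * g n \<omega> \<le> 2 * lam n * \<bar>g n \<omega>\<bar>" by simp
        also have "\<dots> \<le> 2 * lam n * (((L (\<xi> (Suc n) \<omega>))\<^sup>2 + (dist (Y n \<omega>) z)\<^sup>2) / 2)"
          using elim(2) l by (intro mult_left_mono) auto
        finally have "- 2 * lam n * g n \<omega> \<le> lam n * ((L (\<xi> (Suc n) \<omega>))\<^sup>2 + (dist (Y n \<omega>) z)\<^sup>2)" by simp
        moreover have "0 \<le> lam n * ((L (\<xi> (Suc n) \<omega>))\<^sup>2 + (dist (Y n \<omega>) z)\<^sup>2)" using l by simp
        ultimately show ?case using elim(1) by simp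
      qed
    qed
  qed
  have gint: "integrable P (g n)" for n
  proof (rule Bochner_Integration.integrable_bound[of _ "\<lambda>\<omega>. ((L (\<xi> (Suc n) \<omega>))\<^sup>2 + (dist (Y n \<omega>) z)\<^sup>2) / 2"])
    show "integrable P (\<lambda>\<omega>. ((L (\<xi> (Suc n) \<omega>))\<^sup>2 + (dist (Y n \<omega>) z)\<^sup>2) / 2)"
      using L2xi[of n] Dint[of n] by simp
    show "g n \<in> borel_measurable P" by (rule gmeas)
    show "AE \<omega> in P. norm (g n \<omega>) \<le> norm (((L (\<xi> (Suc n) \<omega>))\<^sup>2 + (dist (Y n \<omega>) z)\<^sup>2) / 2)"
      using gbAE[of n] by eventually_elim simp
  qed
  have Lm0: "Lm \<ge> 0" unfolding Lm_def using assms(17) by (intro Bochner_Integration.integral_nonneg) (simp add: less_imp_le)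
  have Frint: "integrable P (\<lambda>\<omega>. Fr (Y n \<omega>))" for n
  proof (rule Bochner_Integration.integrable_bound[of _ "\<lambda>\<omega>. Lm * (1 + (dist (Y n \<omega>) z)\<^sup>2)"])
    show "integrable P (\<lambda>\<omega>. Lm * (1 + (dist (Y n \<omega>) z)\<^sup>2))" using Dint[of n] by simp
    show "(\<lambda>\<omega>. Fr (Y n \<omega>)) \<in> borel_measurable P" using measurable_compose[OF Ymeas Frmeas] .
    have "norm (Fr (Y n \<omega>)) \<le> norm (Lm * (1 + (dist (Y n \<omega>) z)\<^sup>2))" for \<omega>
    proof -
      let ?d = "dist (Y n \<omega>) z"
      have "?d \<le> 1 + ?d\<^sup>2"
      proof (cases "?d \<le> 1")
        case True then show ?thesis by (simp add: add_increasing2)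
      next
        case False
        then have "1 \<le> ?d" by simp
        from mult_left_mono[OF this zero_le_dist[of "Y n \<omega>" z]] have "?d \<le> ?d * ?d" by simp
        then show ?thesis by (simp add: power2_eq_square)
      qed
      then have "Lm * ?d \<le> Lm * (1 + ?d\<^sup>2)" using Lm0 by (intro mult_left_mono) auto
      then show ?thesis using Frb[of "Y n \<omega>"] Fr0[of "Y n \<omega>"] Lm0 by simp
    qed
    then show "AE \<omega> in P. norm (Fr (Y n \<omega>)) \<le> norm (Lm * (1 + (dist (Y n \<omega>) z)\<^sup>2))" by simp
  qed
  have indep: "(\<integral>\<omega>. g n \<omega> \<partial>P) = (\<integral>\<omega>. Fr (Y n \<omega>) \<partial>P)" for n
  proof -
    define S where "S = PiM {..<n} (\<lambda>_. M)"
    define T where "T = PiM {n} (\<lambda>_. M)"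
    define R1 where "R1 \<omega> = restrict (\<lambda>i. \<xi> (Suc i) \<omega>) {..<n}" for \<omega>
    define R2 where "R2 \<omega> = restrict (\<lambda>i. \<xi> (Suc i) \<omega>) {n}" for \<omega>
    have iv: "P.indep_var S R1 T R2"
      unfolding S_def T_def R1_def R2_def
      by (rule P.indep_var_restrict[OF assms(13)]) auto
    have R1m: "R1 \<in> measurable P S" unfolding R1_def S_def using \<xi>meas by (intro measurable_restrict) auto
    have R2m: "R2 \<in> measurable P T" unfolding R2_def T_def using \<xi>meas by (intro measurable_restrict) auto
    define Q1 where "Q1 = distr P S R1"
    define Q2 where "Q2 = distr P T R2"
    have dq: "distr P (S \<Otimes>\<^sub>M T) (\<lambda>\<omega>. (R1 \<omega>, R2 \<omega>)) = Q1 \<Otimes>\<^sub>M Q2"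
      using iv unfolding P.indep_var_distribution_eq Q1_def Q2_def by simp
    define hh where "hh = (\<lambda>w::'a \<times> 'e. fr (snd w) (fst w) - fr (snd w) z)"
    have hhm': "hh \<in> borel_measurable (borel \<Otimes>\<^sub>M M)" unfolding hh_def by (rule hhm)
    define hp where "hp w = hh (X n (fst w), snd w n)" for w :: "(nat \<Rightarrow> 'e) \<times> (nat \<Rightarrow> 'e)"
    have Xm: "X n \<in> borel_measurable S" unfolding S_def by (rule Xmeas[OF le_refl])
    have cn: "(\<lambda>t. t n) \<in> measurable T M" unfolding T_def by (rule measurable_component_singleton) simp
    have hpm: "hp \<in> borel_measurable (S \<Otimes>\<^sub>M T)"
    proof -
      have "(\<lambda>w. (X n (fst w), snd w n)) \<in> measurable (S \<Otimes>\<^sub>M T) (borel \<Otimes>\<^sub>M M)"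
        by (intro measurable_Pair measurable_compose[OF measurable_fst Xm] measurable_compose[OF measurable_snd cn])
      from measurable_compose[OF this hhm'] show ?thesis unfolding hp_def .
    qed
    have pm: "(\<lambda>\<omega>. (R1 \<omega>, R2 \<omega>)) \<in> measurable P (S \<Otimes>\<^sub>M T)"
      by (intro measurable_Pair R1m R2m)
    have gh: "g n \<omega> = hp (R1 \<omega>, R2 \<omega>)" for \<omega>
      unfolding g_def hp_def hh_def Y_def R1_def R2_def by simp
    have ghf: "(\<lambda>x. hp (R1 x, R2 x)) = g n" by (simp add: gh fun_eq_iff)
    interpret Q1: prob_space Q1 unfolding Q1_def by (rule P.prob_space_distr[OF R1m])
    interpret Q2: prob_space Q2 unfolding Q2_def by (rule P.prob_space_distr[OF R2m])
    interpret QQ: pair_sigma_finite Q1 Q2 proof qed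
    have hint: "integrable (Q1 \<Otimes>\<^sub>M Q2) hp"
      using integrable_distr_eq[OF pm hpm] gint[of n] unfolding dq ghf by simp
    have inner: "(\<integral>t. hp (s, t) \<partial>Q2) = Fr (X n s)" for s
    proof -
      have m2: "(\<lambda>e. hh (X n s, e)) \<in> borel_measurable M"
        using measurable_Pair2[OF hhm', of "X n s"] by simp
      have m1: "(\<lambda>t. hp (s, t)) \<in> borel_measurable T"
        unfolding hp_def using measurable_compose[OF cn m2] by simp
      have "(\<integral>t. hp (s, t) \<partial>Q2) = (\<integral>\<omega>. hp (s, R2 \<omega>) \<partial>P)"
        unfolding Q2_def by (rule integral_distr[OF R2m m1])
      also have "\<dots> = (\<integral>\<omega>. hh (X n s, \<xi> (Suc n) \<omega>) \<partial>P)" unfolding hp_def R2_def by simp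
      also have "\<dots> = (\<integral>e. hh (X n s, e) \<partial>distr P M (\<xi> (Suc n)))"
        by (rule integral_distr[OF \<xi>meas m2, symmetric])
      also have "\<dots> = Fr (X n s)" unfolding assms(14) hh_def Fr_def by simp
      finally show ?thesis .
    qed
    have "(\<integral>\<omega>. g n \<omega> \<partial>P) = (\<integral>w. hp w \<partial>distr P (S \<Otimes>\<^sub>M T) (\<lambda>\<omega>. (R1 \<omega>, R2 \<omega>)))"
      by (subst integral_distr[OF pm hpm]) (simp add: ghf)
    also have "\<dots> = (\<integral>w. hp w \<partial>(Q1 \<Otimes>\<^sub>M Q2))" unfolding dq ..
    also have "\<dots> = (\<integral>s. (\<integral>t. hp (s, t) \<partial>Q2) \<partial>Q1)" by (rule QQ.integral_fst'[OF hint, symmetric])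
    also have "\<dots> = (\<integral>s. Fr (X n s) \<partial>Q1)" by (simp add: inner)
    also have "\<dots> = (\<integral>\<omega>. Fr (X n (R1 \<omega>)) \<partial>P)"
      unfolding Q1_def by (rule integral_distr[OF R1m measurable_compose[OF Xm Frmeas]])
    also have "\<dots> = (\<integral>\<omega>. Fr (Y n \<omega>) \<partial>P)" unfolding Y_def R1_def ..
    finally show ?thesis .
  qed
  define D where "D n = (\<integral>\<omega>. (dist (Y n \<omega>) z)\<^sup>2 \<partial>P)" for n
  define A where "A n = (\<integral>\<omega>. Fr (Y n \<omega>) \<partial>P)" for n
  have Dstep: "D (Suc n) \<le> D n - 2 * lam n * A n + (lam n)\<^sup>2 * Lb" for n
  proof -
    have "D (Suc n) \<le> (\<integral>\<omega>. (dist (Y n \<omega>) z)\<^sup>2 - 2 * lam n * g n \<omega> + (lam n)\<^sup>2 * (L (\<xi> (Suc n) \<omega>))\<^sup>2 \<partial>P)"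
      unfolding D_def
      by (rule integral_mono_AE[OF Dint _ stepAE]) (use Dint[of n] gint[of n] L2xi[of n] in simp)
    also have "\<dots> = D n - 2 * lam n * (\<integral>\<omega>. g n \<omega> \<partial>P) + (lam n)\<^sup>2 * (\<integral>\<omega>. (L (\<xi> (Suc n) \<omega>))\<^sup>2 \<partial>P)"
      unfolding D_def using Dint[of n] gint[of n] L2xi[of n] by simp
    also have "\<dots> = D n - 2 * lam n * A n + (lam n)\<^sup>2 * Lb" unfolding A_def indep L2xiI ..
    finally show ?thesis .
  qed
  have D0: "D 0 = (dist x0 z)\<^sup>2" unfolding D_def by (simp add: Y0 P.prob_space)
  have Dnn: "D m \<ge> 0" for m unfolding D_def by (intro Bochner_Integration.integral_nonneg) simp
  have Lb0: "Lb \<ge> 0" unfolding Lb_def by (intro Bochner_Integration.integral_nonneg) simp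
  have A0: "A n \<ge> 0" for n unfolding A_def using Fr0 by (intro Bochner_Integration.integral_nonneg) simp
  have sumineq: "2 * (\<Sum>n<m. lam n * A n) \<le> D 0 - D m + Lb * (\<Sum>n<m. (lam n)\<^sup>2)" for m
  proof (induction m)
    case 0 then show ?case by simp
  next
    case (Suc m)
    have e1: "Lb * (\<Sum>n<Suc m. (lam n)\<^sup>2) = Lb * (\<Sum>n<m. (lam n)\<^sup>2) + (lam m)\<^sup>2 * Lb"
      by (simp add: algebra_simps)
    have e2: "2 * (\<Sum>n<Suc m. lam n * A n) = 2 * (\<Sum>n<m. lam n * A n) + 2 * lam m * A m" by simp
    show ?case unfolding e1 e2 using Suc Dstep[of m] by linarith
  qed
  have T0: "(\<Sum>n. (lam n)\<^sup>2) \<ge> 0" by (intro suminf_nonneg assms(11)) simp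
  have sumbound: "2 * (\<Sum>n<m. lam n * A n) \<le> (dist x0 z)\<^sup>2 + Lb * T" for m
  proof -
    have "(\<Sum>n<m. (lam n)\<^sup>2) \<le> (\<Sum>n. (lam n)\<^sup>2)" by (rule sum_le_suminf[OF assms(11)]) auto
    then have "(\<Sum>n<m. (lam n)\<^sup>2) \<le> T" using assms(24) by linarith
    then have "Lb * (\<Sum>n<m. (lam n)\<^sup>2) \<le> Lb * T" using Lb0 by (intro mult_left_mono) auto
    then show ?thesis using sumineq[of m] D0 Dnn[of m] by linarith
  qed
  have nnint: "(\<integral>\<^sup>+ \<omega>. e2ennreal (integral_fun M f (x n \<omega>) - integral_fun M f z) \<partial>P) = ennreal (A n)" for n
  proof -
    have "(\<integral>\<^sup>+ \<omega>. e2ennreal (integral_fun M f (x n \<omega>) - integral_fun M f z) \<partial>P) = (\<integral>\<^sup>+ \<omega>. ennreal (Fr (Y n \<omega>)) \<partial>P)"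
      using xY by (intro nn_integral_cong_AE) (auto simp: FrI[unfolded I_def])
    also have "\<dots> = ennreal (A n)" unfolding A_def
      by (intro nn_integral_eq_integral Frint) (simp add: Fr0)
    finally show ?thesis .
  qed
  have b0: "b > 0" using assms(22) by (smt (verit) zero_le_power2)
  have Tpos: "T > 0" using assms(24) T0 by linarith
  show ?thesis unfolding nnint Lb_def[symmetric]
  proof (intro allI impI)
    fix \<epsilon> :: real and N :: nat assume \<epsilon>: "\<epsilon> > 0"
    define b' where "b' = (b + 4 * Lb * T) / \<epsilon>"
    define th where "th = \<theta> N b'"
    have bb: "b + 4 * Lb * T > 0" using b0 Lb0 Tpos by (simp add: add_pos_nonneg)
    have b'0: "b' > 0" unfolding b'_def using bb \<epsilon> by simp
    show "\<exists>n. N \<le> n \<and> n \<le> \<theta> N ((b + 4 * Lb * T) / \<epsilon>) \<and> ennreal (A n) < ennreal \<epsilon>"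
    proof (rule ccontr)
      assume H: "\<not> ?thesis"
      have AH: "\<epsilon> \<le> A n" if "n \<in> {N..th}" for n
      proof (rule ccontr)
        assume "\<not> \<epsilon> \<le> A n"
        then have "ennreal (A n) < ennreal \<epsilon>" using A0[of n] by (simp add: ennreal_less_iff)
        then show False using H that unfolding th_def b'_def by auto
      qed
      have "b' \<le> (\<Sum>n = N..th. lam n)" unfolding th_def by (rule assms(23)[OF b'0])
      then have "\<epsilon> * b' \<le> \<epsilon> * (\<Sum>n = N..th. lam n)" using \<epsilon> by (intro mult_left_mono) auto
      also have "\<dots> = (\<Sum>n = N..th. lam n * \<epsilon>)" by (simp add: sum_distrib_left mult.commute)
      also have "\<dots> \<le> (\<Sum>n = N..th. lam n * A n)"
        using AH assms(9) by (intro sum_mono mult_left_mono) (auto simp: less_imp_le)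
      also have "\<dots> \<le> (\<Sum>n<Suc th. lam n * A n)"
        using A0 assms(9) by (intro sum_mono2) (auto simp: less_imp_le)
      finally have "\<epsilon> * b' \<le> (\<Sum>n<Suc th. lam n * A n)" .
      moreover have "\<epsilon> * b' = b + 4 * Lb * T" unfolding b'_def using \<epsilon> by simp
      moreover have "2 * (\<Sum>n<Suc th. lam n * A n) \<le> (dist x0 z)\<^sup>2 + Lb * T" by (rule sumbound)
      moreover have "0 \<le> Lb * T" using Lb0 Tpos by simp
      ultimately show False using assms(22) b0 by linarith
    qed
  qed
qed

end
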